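(* Let $R$ be a ring and let $S$ be a non-empty subset of $R$. For an ideal $\mathfrak{b}$ of $R$ write $(S+\mathfrak{b})/\mathfrak{b}$ for the image of $S$ in $R/\mathfrak{b}$. \begin{enumerate} \item If there exists an ideal $\mathfrak{b}$ of $R$ such that $(S+\mathfrak{b})/\mathfrak{b}\subseteq \mathcal{C}_{R/\mathfrak{b}}$, then there is a least ideal $\mathfrak{a}(S)$ of $R$ (with respect to inclusion) with this property. \item If there exists an ideal $\mathfrak{b}$ of $R$ such that $(S+\mathfrak{b})/\mathfrak{b}\subseteq {}'\mathcal{C}_{R/\mathfrak{b}}$, then there is a least ideal ${}'\mathfrak{a}(S)$ of $R$ with this property, and ${}'\mathfrak{a}(S)\subseteq \mathfrak{a}(S)$. \item If there exists an ideal $\mathfrak{b}$ of $R$ such that $(S+\mathfrak{b})/\mathfrak{b}\subseteq \mathcal{C}'_{R/\mathfrak{b}}$, then there is a least ideal $\mathfrak{a}'(S)$ of $R$ with this property, and $\mathfrak{a}'(S)\subseteq \mathfrak{a}(S)$. \end{enumerate}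
   Context: All rings are associative with $1$. For a ring $A$: ${}'\mathcal{C}_A=\{r\in A: xr=0\Rightarrow x=0 \text{ for } x\in A\}$ (left regular elements), $\mathcal{C}'_A=\{r\in A: rx=0\Rightarrow x=0\}$ (right regular elements), and $\mathcal{C}_A={}'\mathcal{C}_A\cap\mathcal{C}'_A$ (regular elements). *)

theory Defs
  imports "HOL-Algebra.QuotRing"
begin

definition left_regular_elems :: "('a, 'b) ring_scheme \<Rightarrow> 'a set" where
  "left_regular_elems A = {r \<in> carrier A. \<forall>x \<in> carrier A. x \<otimes>\<^bsub>A\<^esub> r = \<zero>\<^bsub>A\<^esub> \<longrightarrow> x = \<zero>\<^bsub>A\<^esub>}"

definition right_regular_elems :: "('a, 'b) ring_scheme \<Rightarrow> 'a set" where
  "right_regular_elems A = {r \<in> carrier A. \<forall>x \<in> carrier A. r \<otimes>\<^bsub>A\<^esub> x = \<zero>\<^bsub>A\<^esub> \<longrightarrow> x = \<zero>\<^bsub>A\<^esub>}"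

definition regular_elems :: "('a, 'b) ring_scheme \<Rightarrow> 'a set" where
  "regular_elems A = left_regular_elems A \<inter> right_regular_elems A"

definition quot_image :: "('a, 'b) ring_scheme \<Rightarrow> 'a set \<Rightarrow> 'a set \<Rightarrow> 'a set set" where
  "quot_image R S b = (\<lambda>s. b +>\<^bsub>R\<^esub> s) ` S"

definition least_wrt_incl :: "('a set \<Rightarrow> bool) \<Rightarrow> 'a set \<Rightarrow> bool" where
  "least_wrt_incl P I \<longleftrightarrow> P I \<and> (\<forall>J. P J \<longrightarrow> I \<subseteq> J)"

end

theory Submission
  imports Defs
begin

lemma rcos_eq_iff:
  assumes "ideal b R" "y \<in> carrier R"
  shows "(b +>\<^bsub>R\<^esub> y = b) \<longleftrightarrow> y \<in> b"
  using ideal.rcos_const_imp_mem[OF assms(1) assms(2)] ring.a_rcos_zero[OF ideal.axioms(2)[OF assms(1)] assms(1)]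
  by blast

lemma quot_simps:
  "carrier (R Quot b) = a_rcosets\<^bsub>R\<^esub> b"
  "mult (R Quot b) = rcoset_mult R b"
  "zero (R Quot b) = b"
  by (simp_all add: FactRing_def)

lemma rcosets_iff: "A \<in> a_rcosets\<^bsub>R\<^esub> b \<longleftrightarrow> (\<exists>x\<in>carrier R. A = b +>\<^bsub>R\<^esub> x)"
  by (auto simp add: A_RCOSETS_def')

lemma rcosets_img: "a_rcosets\<^bsub>R\<^esub> b = (\<lambda>x. b +>\<^bsub>R\<^esub> x) ` carrier R"
  by (auto simp add: A_RCOSETS_def')

lemma left_char:
  assumes "ideal b R" "s \<in> carrier R"
  shows "(b +>\<^bsub>R\<^esub> s \<in> left_regular_elems (R Quot b)) \<longleftrightarrow> (\<forall>x\<in>carrier R. x \<otimes>\<^bsub>R\<^esub> s \<in> b \<longrightarrow> x \<in> b)"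
proof -
  have r: "ring R" using assms(1) ideal.axioms(2) by blast
  have m: "\<And>x. x \<in> carrier R \<Longrightarrow> rcoset_mult R b (b +>\<^bsub>R\<^esub> x) (b +>\<^bsub>R\<^esub> s) = b +>\<^bsub>R\<^esub> (x \<otimes>\<^bsub>R\<^esub> s)"
    using ideal.rcoset_mult_add[OF assms(1)] assms(2) by blast
  have c: "\<And>x. x \<in> carrier R \<Longrightarrow> x \<otimes>\<^bsub>R\<^esub> s \<in> carrier R"
    using ring.ring_simprules(5)[OF r] assms(2) by blast
  have sc: "b +>\<^bsub>R\<^esub> s \<in> carrier (R Quot b)"
    using assms(2) by (auto simp: quot_simps rcosets_iff)
  have "(b +>\<^bsub>R\<^esub> s \<in> left_regular_elems (R Quot b)) \<longleftrightarrow>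
     (\<forall>x\<in>carrier R. rcoset_mult R b (b +>\<^bsub>R\<^esub> x) (b +>\<^bsub>R\<^esub> s) = b \<longrightarrow> b +>\<^bsub>R\<^esub> x = b)"
    unfolding left_regular_elems_def using sc by (simp only: quot_simps rcosets_img ball_simps mem_Collect_eq simp_thms)
  also have "\<dots> \<longleftrightarrow> (\<forall>x\<in>carrier R. x \<otimes>\<^bsub>R\<^esub> s \<in> b \<longrightarrow> x \<in> b)"
    using m c rcos_eq_iff[OF assms(1)] by simp
  finally show ?thesis .
qed

lemma right_char:
  assumes "ideal b R" "s \<in> carrier R"
  shows "(b +>\<^bsub>R\<^esub> s \<in> right_regular_elems (R Quot b)) \<longleftrightarrow> (\<forall>x\<in>carrier R. s \<otimes>\<^bsub>R\<^esub> x \<in> b \<longrightarrow> x \<in> b)"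
proof -
  have r: "ring R" using assms(1) ideal.axioms(2) by blast
  have m: "\<And>x. x \<in> carrier R \<Longrightarrow> rcoset_mult R b (b +>\<^bsub>R\<^esub> s) (b +>\<^bsub>R\<^esub> x) = b +>\<^bsub>R\<^esub> (s \<otimes>\<^bsub>R\<^esub> x)"
    using ideal.rcoset_mult_add[OF assms(1)] assms(2) by blast
  have c: "\<And>x. x \<in> carrier R \<Longrightarrow> s \<otimes>\<^bsub>R\<^esub> x \<in> carrier R"
    using ring.ring_simprules(5)[OF r] assms(2) by blast
  have sc: "b +>\<^bsub>R\<^esub> s \<in> carrier (R Quot b)"
    using assms(2) by (auto simp: quot_simps rcosets_iff)
  have "(b +>\<^bsub>R\<^esub> s \<in> right_regular_elems (R Quot b)) \<longleftrightarrow>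
     (\<forall>x\<in>carrier R. rcoset_mult R b (b +>\<^bsub>R\<^esub> s) (b +>\<^bsub>R\<^esub> x) = b \<longrightarrow> b +>\<^bsub>R\<^esub> x = b)"
    unfolding right_regular_elems_def using sc by (simp only: quot_simps rcosets_img ball_simps mem_Collect_eq simp_thms)
  also have "\<dots> \<longleftrightarrow> (\<forall>x\<in>carrier R. s \<otimes>\<^bsub>R\<^esub> x \<in> b \<longrightarrow> x \<in> b)"
    using m c rcos_eq_iff[OF assms(1)] by simp
  finally show ?thesis .
qed


lemma least_ex:
  assumes r: "ring R" and ex: "\<exists>b. P b"
    and P: "\<And>b. P b \<longleftrightarrow> ideal b R \<and> (\<forall>(y,x)\<in>T. y \<in> b \<longrightarrow> x \<in> b)"
  shows "least_wrt_incl P (\<Inter>{b. P b})"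
proof -
  have "ideal (\<Inter>{b. P b}) R"
    using ring.i_Intersect[OF r, of "{b. P b}"] ex P by blast
  moreover have "\<forall>(y,x)\<in>T. y \<in> \<Inter>{b. P b} \<longrightarrow> x \<in> \<Inter>{b. P b}"
    using P by auto
  ultimately have "P (\<Inter>{b. P b})" using P by blast
  then show ?thesis unfolding least_wrt_incl_def by blast
qed

lemma least_mono:
  assumes "least_wrt_incl P a" "least_wrt_incl Q c" "\<And>b. P b \<Longrightarrow> Q b"
  shows "c \<subseteq> a"
  using assms unfolding least_wrt_incl_def by blast

lemma left_quot:
  assumes "ideal b R" "S \<subseteq> carrier R"
  shows "quot_image R S b \<subseteq> left_regular_elems (R Quot b) \<longleftrightarrow>
    (\<forall>(y,x)\<in>{(x \<otimes>\<^bsub>R\<^esub> s, x) | s x. s \<in> S \<and> x \<in> carrier R}. y \<in> b \<longrightarrow> x \<in> b)" (is "_ \<longleftrightarrow> ?RHS")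
proof -
  have "quot_image R S b \<subseteq> left_regular_elems (R Quot b) \<longleftrightarrow> (\<forall>s\<in>S. b +>\<^bsub>R\<^esub> s \<in> left_regular_elems (R Quot b))"
    by (simp add: quot_image_def image_subset_iff)
  also have "\<dots> \<longleftrightarrow> (\<forall>s\<in>S. \<forall>x\<in>carrier R. x \<otimes>\<^bsub>R\<^esub> s \<in> b \<longrightarrow> x \<in> b)"
    apply (rule ball_cong[OF refl])
    apply (rule left_char[OF assms(1)])
    using assms(2) by blast
  also have "\<dots> \<longleftrightarrow> ?RHS" by auto
  finally show ?thesis .
qed

lemma right_quot:
  assumes "ideal b R" "S \<subseteq> carrier R"
  shows "quot_image R S b \<subseteq> right_regular_elems (R Quot b) \<longleftrightarrow>
    (\<forall>(y,x)\<in>{(s \<otimes>\<^bsub>R\<^esub> x, x) | s x. s \<in> S \<and> x \<in> carrier R}. y \<in> b \<longrightarrow> x \<in> b)" (is "_ \<longleftrightarrow> ?RHS")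
proof -
  have "quot_image R S b \<subseteq> right_regular_elems (R Quot b) \<longleftrightarrow> (\<forall>s\<in>S. b +>\<^bsub>R\<^esub> s \<in> right_regular_elems (R Quot b))"
    by (simp add: quot_image_def image_subset_iff)
  also have "\<dots> \<longleftrightarrow> (\<forall>s\<in>S. \<forall>x\<in>carrier R. s \<otimes>\<^bsub>R\<^esub> x \<in> b \<longrightarrow> x \<in> b)"
    apply (rule ball_cong[OF refl])
    apply (rule right_char[OF assms(1)])
    using assms(2) by blast
  also have "\<dots> \<longleftrightarrow> ?RHS" by auto
  finally show ?thesis .
qed

lemma ball_pair_union:
  "(\<forall>(y,x)\<in>A. y \<in> b \<longrightarrow> x \<in> b) \<and> (\<forall>(y,x)\<in>B. y \<in> b \<longrightarrow> x \<in> b) \<longleftrightarrow> (\<forall>(y,x)\<in>A \<union> B. y \<in> b \<longrightarrow> x \<in> b)"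
  by auto

lemma reg_quot:
  assumes "ideal b R" "S \<subseteq> carrier R"
  shows "quot_image R S b \<subseteq> regular_elems (R Quot b) \<longleftrightarrow>
    (\<forall>(y,x)\<in>{(x \<otimes>\<^bsub>R\<^esub> s, x) | s x. s \<in> S \<and> x \<in> carrier R} \<union> {(s \<otimes>\<^bsub>R\<^esub> x, x) | s x. s \<in> S \<and> x \<in> carrier R}. y \<in> b \<longrightarrow> x \<in> b)" (is "_ \<longleftrightarrow> ?RHS")
proof -
  have "quot_image R S b \<subseteq> regular_elems (R Quot b) \<longleftrightarrow>
    quot_image R S b \<subseteq> left_regular_elems (R Quot b) \<and> quot_image R S b \<subseteq> right_regular_elems (R Quot b)"
    unfolding regular_elems_def by blast
  also have "\<dots> \<longleftrightarrow> ?RHS" 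
    unfolding left_quot[OF assms] right_quot[OF assms] by (rule ball_pair_union)
  finally show ?thesis .
qed

theorem proposition1p1:
  fixes R :: "('a, 'b) ring_scheme" and S :: "'a set"
  assumes "ring R" and "S \<subseteq> carrier R" and "S \<noteq> {}"
  shows
    "((\<exists>b. ideal b R \<and> quot_image R S b \<subseteq> regular_elems (R Quot b)) \<longrightarrow>
       (\<exists>a. least_wrt_incl (\<lambda>b. ideal b R \<and> quot_image R S b \<subseteq> regular_elems (R Quot b)) a)) \<and>
    ((\<exists>b. ideal b R \<and> quot_image R S b \<subseteq> left_regular_elems (R Quot b)) \<longrightarrow>
       (\<exists>la. least_wrt_incl (\<lambda>b. ideal b R \<and> quot_image R S b \<subseteq> left_regular_elems (R Quot b)) la \<and>
          (\<forall>a. least_wrt_incl (\<lambda>b. ideal b R \<and> quot_image R S b \<subseteq> regular_elems (R Quot b)) a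
               \<longrightarrow> la \<subseteq> a))) \<and>
    ((\<exists>b. ideal b R \<and> quot_image R S b \<subseteq> right_regular_elems (R Quot b)) \<longrightarrow>
       (\<exists>ra. least_wrt_incl (\<lambda>b. ideal b R \<and> quot_image R S b \<subseteq> right_regular_elems (R Quot b)) ra \<and>
          (\<forall>a. least_wrt_incl (\<lambda>b. ideal b R \<and> quot_image R S b \<subseteq> regular_elems (R Quot b)) a
               \<longrightarrow> ra \<subseteq> a)))"
proof (intro conjI impI)
  let ?P = "\<lambda>b. ideal b R \<and> quot_image R S b \<subseteq> regular_elems (R Quot b)"
  let ?L = "\<lambda>b. ideal b R \<and> quot_image R S b \<subseteq> left_regular_elems (R Quot b)"
  let ?Q = "\<lambda>b. ideal b R \<and> quot_image R S b \<subseteq> right_regular_elems (R Quot b)"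
  have PL: "\<And>b. ?P b \<Longrightarrow> ?L b" unfolding regular_elems_def by blast
  have PQ: "\<And>b. ?P b \<Longrightarrow> ?Q b" unfolding regular_elems_def by blast
  have Peq: "?P b \<longleftrightarrow> ideal b R \<and> (\<forall>(y,x)\<in>{(x \<otimes>\<^bsub>R\<^esub> s, x) | s x. s \<in> S \<and> x \<in> carrier R} \<union> {(s \<otimes>\<^bsub>R\<^esub> x, x) | s x. s \<in> S \<and> x \<in> carrier R}. y \<in> b \<longrightarrow> x \<in> b)" for b
    proof (cases "ideal b R")
      case True show ?thesis by (simp only: reg_quot[OF True assms(2)])
    next
      case False then show ?thesis by simp
    qed
  have Leq: "?L b \<longleftrightarrow> ideal b R \<and> (\<forall>(y,x)\<in>{(x \<otimes>\<^bsub>R\<^esub> s, x) | s x. s \<in> S \<and> x \<in> carrier R}. y \<in> b \<longrightarrow> x \<in> b)" for b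
    proof (cases "ideal b R")
      case True show ?thesis by (simp only: left_quot[OF True assms(2)])
    next
      case False then show ?thesis by simp
    qed
  have Qeq: "?Q b \<longleftrightarrow> ideal b R \<and> (\<forall>(y,x)\<in>{(s \<otimes>\<^bsub>R\<^esub> x, x) | s x. s \<in> S \<and> x \<in> carrier R}. y \<in> b \<longrightarrow> x \<in> b)" for b
    proof (cases "ideal b R")
      case True show ?thesis by (simp only: right_quot[OF True assms(2)])
    next
      case False then show ?thesis by simp
    qed
  show "\<exists>a. least_wrt_incl ?P a" if "\<exists>b. ?P b"
    using least_ex[of R ?P, OF assms(1) that Peq] by (rule exI)
  show "\<exists>la. least_wrt_incl ?L la \<and> (\<forall>a. least_wrt_incl ?P a \<longrightarrow> la \<subseteq> a)" if "\<exists>b. ?L b"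
  proof (intro exI conjI allI impI)
    show l: "least_wrt_incl ?L (\<Inter>{b. ?L b})" by (rule least_ex[of R ?L, OF assms(1) that Leq])
    fix a assume "least_wrt_incl ?P a"
    then show "\<Inter>{b. ?L b} \<subseteq> a" using least_mono[of ?P a ?L "\<Inter>{b. ?L b}"] l PL by fast
  qed
  show "\<exists>ra. least_wrt_incl ?Q ra \<and> (\<forall>a. least_wrt_incl ?P a \<longrightarrow> ra \<subseteq> a)" if "\<exists>b. ?Q b"
  proof (intro exI conjI allI impI)
    show l: "least_wrt_incl ?Q (\<Inter>{b. ?Q b})" by (rule least_ex[of R ?Q, OF assms(1) that Qeq])
    fix a assume "least_wrt_incl ?P a"
    then show "\<Inter>{b. ?Q b} \<subseteq> a" using least_mono[of ?P a ?Q "\<Inter>{b. ?Q b}"] l PQ by fast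
  qed
qed

end
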